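(* For all $m,t\in\mathbb{N}$: $R_t(m,m)=0$, $R_t(m-1,m)=1$, and $R_t(m-2,m)=\min\{t,m\}+1$.
   Context: For a $t\times n$ matrix $\mathbf{v}$ over $\mathbb{F}_2$ with rows $\overline{v}_1,\dots,\overline{v}_t$, $\mathrm{wt}^{(t)}(\mathbf{v})=\left|\bigcup_{i} \mathrm{supp}(\overline{v}_i)\right|$ and $d^{(t)}(\mathbf{u},\mathbf{v})=\mathrm{wt}^{(t)}(\mathbf{u}-\mathbf{v})$. For a linear code $C\subseteq\mathbb{F}_2^n$, $C^t$ is the set of $t\times n$ matrices all of whose rows lie in $C$, and $R_t(C)$ is the smallest integer $\rho$ such that for every $\mathbf{v}\in\mathbb{F}_2^{t\times n}$ some $\mathbf{c}\in C^t$ has $d^{(t)}(\mathbf{v},\mathbf{c})\le\rho$. Reed–Muller codes $\mathrm{RM}(r,m)\subseteq\mathbb{F}_2^{2^m}$: $\mathrm{RM}(0,m)=\{\overline{0},\overline{1}\}$, $\mathrm{RM}(m,m)=\mathbb{F}_2^{2^m}$, and for $1\leq r\leq m-1$, $\mathrm{RM}(r,m)=\{(\overline{u},\overline{u}+\overline{v}) : \overline{u}\in \mathrm{RM}(r,m-1),\ \overline{v}\in\mathrm{RM}(r-1,m-1)\}$. (In particular $\mathrm{RM}(m-1,m)$ is the even-weight code of length $2^m$ and $\mathrm{RM}(m-2,m)$ is the extended Hamming code of length $2^m$; for $m=1$, $\mathrm{RM}(m-2,m)$ is interpreted as $\{\overline{0}\}$.) $R_t(r,m)=R_t(\mathrm{RM}(r,m))$.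 *)

theory Defs
  imports Main
begin

text \<open>Vectors of F_2^n are boolean lists of length n (True = 1); addition is XOR.\<close>

definition vadd :: "bool list \<Rightarrow> bool list \<Rightarrow> bool list" where
  "vadd u v = map2 (\<noteq>) u v"

definition supp :: "bool list \<Rightarrow> nat set" where
  "supp v = {i. i < length v \<and> v ! i}"

definition is_mat :: "nat \<Rightarrow> nat \<Rightarrow> bool list list \<Rightarrow> bool" where
  "is_mat t n M \<longleftrightarrow> length M = t \<and> (\<forall>v\<in>set M. length v = n)"

definition wt_t :: "bool list list \<Rightarrow> nat" where
  "wt_t M = card (\<Union>v\<in>set M. supp v)"

definition dist_t :: "bool list list \<Rightarrow> bool list list \<Rightarrow> nat" where
  "dist_t U V = wt_t (map2 vadd U V)"

definition code_pow :: "nat \<Rightarrow> bool list set \<Rightarrow> bool list list set" where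
  "code_pow t C = {M. length M = t \<and> set M \<subseteq> C}"

definition cov_rad :: "nat \<Rightarrow> nat \<Rightarrow> bool list set \<Rightarrow> nat" where
  "cov_rad t n C = (LEAST \<rho>. \<forall>V. is_mat t n V \<longrightarrow> (\<exists>c\<in>code_pow t C. dist_t V c \<le> \<rho>))"

text \<open>Reed--Muller codes RM(r,m) of length 2^m; for r < 0 the code is {0}
  (this covers RM(m-2,m) for m = 1 as in the paper).\<close>

fun RM :: "int \<Rightarrow> nat \<Rightarrow> bool list set" where
  "RM r 0 = (if r < 0 then {[False]} else {[False], [True]})"
| "RM r (Suc k) =
     (if r < 0 then {replicate (2 ^ Suc k) False}
      else if r = 0 then {replicate (2 ^ Suc k) False, replicate (2 ^ Suc k) True}
      else if r \<ge> int (Suc k) then {v. length v = 2 ^ Suc k}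
      else {u @ vadd u v | u v. u \<in> RM r k \<and> v \<in> RM (r - 1) k})"

definition R_t :: "nat \<Rightarrow> int \<Rightarrow> nat \<Rightarrow> nat" where
  "R_t t r m = cov_rad t (2 ^ m) (RM r m)"

end

theory Submission
  imports Defs
begin

lemma bit_lt: "(i::nat) < 2^m \<Longrightarrow> m \<le> k \<Longrightarrow> \<not> bit i k"
proof -
  assume a: "i < 2^m" "m \<le> k"
  have "(2::nat)^m \<le> 2^k" using a(2) by (simp add: power_increasing)
  then have "i < 2^k" using a(1) by linarith
  then have "i div 2^k = 0" by simp
  then show ?thesis by (simp add: bit_iff_odd)
qed

lemma bit_add_pow: "(i::nat) < 2^n \<Longrightarrow> bit (i + 2^n) k \<longleftrightarrow> (k = n \<or> bit i k)"
proof -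
  assume a: "i < 2^n"
  have "\<And>j. \<not> bit i j \<or> \<not> bit ((2::nat)^n) j" using bit_lt[OF a] by (auto simp: bit_exp_iff)
  then have "bit (i + 2^n) k \<longleftrightarrow> bit i k \<or> bit ((2::nat)^n) k" by (rule bit_disjunctive_add_iff)
  then show ?thesis by (auto simp: bit_exp_iff)
qed

lemma exists_num: "\<exists>s::nat. s < 2^m \<and> (\<forall>k. bit s k \<longleftrightarrow> k < m \<and> P k)"
proof (induction m arbitrary: P)
  case 0
  have "\<forall>k. \<not> bit (0::nat) k" by simp
  then show ?case by auto
next
  case (Suc m)
  obtain s :: nat where s: "s < 2^m" "\<And>k. bit s k \<longleftrightarrow> k < m \<and> P (Suc k)"
    using Suc[of "\<lambda>k. P (Suc k)"] by blast
  define b :: nat where "b = (if P 0 then 1 else 0)"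
  have "b + 2 * s < 2 ^ Suc m" using s(1) unfolding b_def by auto
  moreover have "\<forall>k. bit (b + 2 * s) k \<longleftrightarrow> k < Suc m \<and> P k"
  proof
    fix k show "bit (b + 2 * s) k \<longleftrightarrow> k < Suc m \<and> P k"
    proof (cases k)
      case 0 
      have "odd (b + 2 * s) \<longleftrightarrow> P 0" unfolding b_def by auto
      then show ?thesis using 0 by (simp only: bit_0) simp
    next
      case (Suc k')
      have "(b + 2 * s) div 2 = s" unfolding b_def by auto
      then have "bit (b + 2 * s) k \<longleftrightarrow> bit s k'" using Suc by (simp only: bit_Suc)
      then show ?thesis using s(2)[of k'] Suc by simp
    qed
  qed
  ultimately show ?case by blast
qed

lemma supp_finite: "finite (supp v)" by (simp add: supp_def)
lemma supp_sub: "supp v \<subseteq> {..<length v}" by (auto simp: supp_def)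

lemma length_vadd[simp]: "length (vadd u v) = min (length u) (length v)"
  by (simp add: vadd_def)

lemma supp_vadd: "length u = length v \<Longrightarrow> supp (vadd u v) = (supp u - supp v) \<union> (supp v - supp u)"
  by (auto simp: supp_def vadd_def)

lemma supp_append: "supp (u @ w) = supp u \<union> (\<lambda>i. i + length u) ` supp w"
proof -
  have "x \<in> (\<lambda>i. i + length u) ` supp w" if "x \<in> supp (u@w)" "x \<notin> supp u" for x
    using that by (intro image_eqI[of _ _ "x - length u"]) (auto simp: supp_def nth_append split: if_splits)
  then show ?thesis by (auto simp: supp_def nth_append)
qed

definition ind :: "nat \<Rightarrow> nat set \<Rightarrow> bool list" where
  "ind n S = map (\<lambda>i. i \<in> S) [0..<n]"

lemma length_ind[simp]: "length (ind n S) = n" by (simp add: ind_def)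
lemma supp_ind: "supp (ind n S) = S \<inter> {..<n}" by (auto simp: ind_def supp_def)

lemma odd_symdiff: "finite A \<Longrightarrow> finite B \<Longrightarrow>
  odd (card ((A - B) \<union> (B - A))) \<longleftrightarrow> (odd (card A) \<noteq> odd (card B))"
proof -
  assume f: "finite A" "finite B"
  have 1: "card ((A - B) \<union> (B - A)) = card (A - B) + card (B - A)"
    using f by (intro card_Un_disjoint) auto
  have 2: "card A = card (A - B) + card (A \<inter> B)"
    using f by (metis Diff_Diff_Int card_Diff_subset_Int card_mono finite_Int inf_le1 le_add_diff_inverse2 Int_commute)
  have 3: "card B = card (B - A) + card (A \<inter> B)"
    using f by (metis Diff_Diff_Int card_Diff_subset_Int card_mono finite_Int inf_le2 le_add_diff_inverse2 Int_commute)
  show ?thesis unfolding 1 2 3 by presburger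
qed

lemma filt_symdiff: "{i \<in> (A - B) \<union> (B - A). P i} = ({i\<in>A. P i} - {i\<in>B. P i}) \<union> ({i\<in>B. P i} - {i\<in>A. P i})"
  by auto

definition evenw :: "nat \<Rightarrow> bool list set" where
  "evenw n = {v. length v = n \<and> even (card (supp v))}"

definition ham :: "nat \<Rightarrow> bool list set" where
  "ham m = {v. length v = 2^m \<and> even (card (supp v)) \<and> (\<forall>k. even (card {i\<in>supp v. bit i k}))}"

lemma vadd_vadd: "length u = length b \<Longrightarrow> vadd u (vadd u b) = b"
  by (rule nth_equalityI) (auto simp: vadd_def)

lemma odd_cnt_vadd: "length u = length v \<Longrightarrow>
  odd (card {i\<in>supp (vadd u v). P i}) \<longleftrightarrow> (odd (card {i\<in>supp u. P i}) \<noteq> odd (card {i\<in>supp v. P i}))"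
proof -
  assume l: "length u = length v"
  have f: "finite {i\<in>supp u. P i}" "finite {i\<in>supp v. P i}" by (simp_all add: supp_finite)
  show ?thesis unfolding supp_vadd[OF l] filt_symdiff using odd_symdiff[OF f] by simp
qed

lemma odd_card_vadd: "length u = length v \<Longrightarrow>
  odd (card (supp (vadd u v))) \<longleftrightarrow> (odd (card (supp u)) \<noteq> odd (card (supp v)))"
  using odd_cnt_vadd[of u v "\<lambda>_. True"] by simp

lemma card_cnt_append: "card {i\<in>supp (u @ w). P i} = card {i\<in>supp u. P i} + card {i\<in>supp w. P (i + length u)}"
proof -
  have e: "{i\<in>supp (u @ w). P i} = {i\<in>supp u. P i} \<union> (\<lambda>i. i + length u) ` {i\<in>supp w. P (i + length u)}"
    by (auto simp: supp_append)
  have d: "{i\<in>supp u. P i} \<inter> (\<lambda>i. i + length u) ` {i\<in>supp w. P (i + length u)} = {}"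
    using supp_sub[of u] by auto
  have "card ((\<lambda>i. i + length u) ` {i\<in>supp w. P (i + length u)}) = card {i\<in>supp w. P (i + length u)}"
    by (rule card_image) (auto simp: inj_on_def)
  then show ?thesis unfolding e using d by (simp add: card_Un_disjoint supp_finite)
qed

lemma card_supp_append: "card (supp (u @ w)) = card (supp u) + card (supp w)"
  using card_cnt_append[of u w "\<lambda>_. True"] by simp

lemma evenw_double: "evenw (2 * N) = {u @ vadd u v | u v. length u = N \<and> v \<in> evenw N}"
proof (intro set_eqI iffI)
  fix w assume w: "w \<in> evenw (2 * N)"
  define u where "u = take N w"
  define b where "b = drop N w"
  define v where "v = vadd u b"
  have l: "length u = N" "length b = N" "length v = N" using w by (auto simp: u_def b_def v_def evenw_def)
  have wu: "w = u @ vadd u v" using l by (simp add: v_def vadd_vadd u_def b_def)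
  have "even (card (supp u) + card (supp b))" using w by (simp add: evenw_def u_def b_def flip: card_supp_append)
  then have "even (card (supp v))" using odd_card_vadd[of u b] l by (auto simp: v_def)
  then show "w \<in> {u @ vadd u v | u v. length u = N \<and> v \<in> evenw N}" using wu l by (auto simp: evenw_def)
next
  fix w assume "w \<in> {u @ vadd u v | u v. length u = N \<and> v \<in> evenw N}"
  then obtain u v where w: "w = u @ vadd u v" "length u = N" "v \<in> evenw N" by blast
  have "odd (card (supp (vadd u v))) \<longleftrightarrow> odd (card (supp u))"
    using odd_card_vadd[of u v] w by (auto simp: evenw_def)
  then show "w \<in> evenw (2 * N)" using w by (auto simp: evenw_def card_supp_append)
qed

lemma ham_Suc_mem:
  assumes "length u = 2^n" "length b = 2^n"
  shows "u @ b \<in> ham (Suc n) \<longleftrightarrow> even (card (supp u)) \<and> even (card (supp b)) \<and>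
     (\<forall>k. odd (card {i\<in>supp u. bit i k}) \<longleftrightarrow> odd (card {i\<in>supp b. bit i k}))"
proof -
  have su: "i < 2^n" if "i \<in> supp u" for i using that supp_sub[of u] assms by auto
  have sb: "i < 2^n" if "i \<in> supp b" for i using that supp_sub[of b] assms by auto
  have cn: "{i\<in>supp u. bit i n} = {}" "{i\<in>supp b. bit i n} = {}" using su sb bit_lt by blast+
  have ck: "card {i\<in>supp (u @ b). bit i k} =
     (if k = n then card (supp b) else card {i\<in>supp u. bit i k} + card {i\<in>supp b. bit i k})" for k
  proof -
    have "{i\<in>supp b. bit (i + 2^n) k} = (if k = n then supp b else {i\<in>supp b. bit i k})"
      using bit_add_pow sb by auto
    then have "card {i\<in>supp (u @ b). bit i k} = card {i\<in>supp u. bit i k} + (if k = n then card (supp b) else card {i\<in>supp b. bit i k})"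
      using card_cnt_append[of u b "\<lambda>i. bit i k"] assms by simp
    then show ?thesis by (cases "k = n") (simp_all add: cn)
  qed
  have len: "length (u @ b) = 2 ^ Suc n" using assms by simp
  show ?thesis
  proof
    assume h: "u @ b \<in> ham (Suc n)"
    then have 1: "even (card (supp u) + card (supp b))" by (simp add: ham_def card_supp_append)
    have 2: "even (card (supp b))"
    proof -
      have "even (card {i\<in>supp (u @ b). bit i n})" using h by (simp add: ham_def)
      then show ?thesis using ck[of n] by simp
    qed
    have 3: "odd (card {i\<in>supp u. bit i k}) \<longleftrightarrow> odd (card {i\<in>supp b. bit i k})" for k
    proof (cases "k = n")
      case True then show ?thesis by (simp add: cn)
    next
      case False
      have "even (card {i\<in>supp (u @ b). bit i k})" using h by (simp add: ham_def)
      then show ?thesis using False ck[of k] by simp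
    qed
    show "even (card (supp u)) \<and> even (card (supp b)) \<and>
     (\<forall>k. odd (card {i\<in>supp u. bit i k}) \<longleftrightarrow> odd (card {i\<in>supp b. bit i k}))" using 1 2 3 by auto
  next
    assume h: "even (card (supp u)) \<and> even (card (supp b)) \<and>
     (\<forall>k. odd (card {i\<in>supp u. bit i k}) \<longleftrightarrow> odd (card {i\<in>supp b. bit i k}))"
    have "even (card {i\<in>supp (u @ b). bit i k})" for k
      using h ck[of k] by (cases "k = n") (auto simp: cn)
    then show "u @ b \<in> ham (Suc n)" using h len by (simp add: ham_def card_supp_append)
  qed
qed

lemma ham_Suc: "ham (Suc n) = {u @ vadd u v | u v. u \<in> evenw (2^n) \<and> v \<in> ham n}"
proof (intro set_eqI iffI)
  fix w assume w: "w \<in> ham (Suc n)"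
  define u where "u = take (2^n) w"
  define b where "b = drop (2^n) w"
  define v where "v = vadd u b"
  have l: "length u = 2^n" "length b = 2^n" "length v = 2^n" using w by (auto simp: u_def b_def v_def ham_def)
  have wu: "w = u @ vadd u v" using l by (simp add: v_def vadd_vadd u_def b_def)
  have ub: "w = u @ b" by (simp add: u_def b_def)
  have h: "even (card (supp u)) \<and> even (card (supp b)) \<and>
     (\<forall>k. odd (card {i\<in>supp u. bit i k}) \<longleftrightarrow> odd (card {i\<in>supp b. bit i k}))"
    using ham_Suc_mem[OF l(1,2)] w ub by simp
  have "even (card {i\<in>supp v. bit i k})" for k
    using h odd_cnt_vadd[of u b "\<lambda>i. bit i k"] l unfolding v_def by auto
  moreover have "even (card (supp v))" using h odd_card_vadd[of u b] l unfolding v_def by auto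
  ultimately have "v \<in> ham n" using l by (simp add: ham_def)
  then show "w \<in> {u @ vadd u v | u v. u \<in> evenw (2^n) \<and> v \<in> ham n}" using wu l h by (auto simp: evenw_def)
next
  fix w assume "w \<in> {u @ vadd u v | u v. u \<in> evenw (2^n) \<and> v \<in> ham n}"
  then obtain u v where w: "w = u @ vadd u v" "u \<in> evenw (2^n)" "v \<in> ham n" by blast
  have l: "length u = 2^n" "length (vadd u v) = 2^n" using w by (auto simp: evenw_def ham_def)
  have "length u = length v" using w by (auto simp: evenw_def ham_def)
  then show "w \<in> ham (Suc n)" unfolding w(1) ham_Suc_mem[OF l]
    using w odd_cnt_vadd[of u v] odd_card_vadd[of u v] by (auto simp: evenw_def ham_def)
qed

lemma RM_full: "1 \<le> m \<Longrightarrow> RM (int m) m = {v. length v = 2^m}"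
  by (cases m) auto

lemma supp_single: "supp [a] = (if a then {0} else {})" by (auto simp: supp_def)

lemma len2: "length v = 2 \<Longrightarrow> \<exists>a b. v = [a, b]"
proof -
  assume "length v = 2"
  then have "length v = Suc (Suc 0)" by simp
  then show ?thesis by (auto simp: length_Suc_conv)
qed

lemma evenw2: "evenw 2 = {[False,False],[True,True]}"
proof (intro set_eqI iffI)
  fix v assume "v \<in> evenw 2"
  then have l: "length v = 2" and e: "even (card (supp v))" by (auto simp: evenw_def)
  obtain a b where v0: "v = [a,b]" using len2[OF l] by blast
  have v: "v = [a,b]" "even (card (supp [a,b]))" using v0 e by auto
  have "card (supp [a,b]) = card (supp [a]) + card (supp [b])" using card_supp_append[of "[a]" "[b]"] by simp
  then show "v \<in> {[False,False],[True,True]}" using v by (cases a; cases b) (auto simp: supp_single)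
next
  fix v assume v: "v \<in> {[False,False],[True,True]}"
  have "card (supp [a,b]) = card (supp [a]) + card (supp [b])" for a b using card_supp_append[of "[a]" "[b]"] by simp
  then show "v \<in> evenw 2" using v by (auto simp: evenw_def supp_single)
qed

lemma evenw1: "evenw 1 = {[False]}"
proof (intro set_eqI iffI)
  fix v assume "v \<in> evenw 1"
  then obtain a where v: "v = [a]" "even (card (supp [a]))" by (auto simp: evenw_def length_Suc_conv)
  then show "v \<in> {[False]}" by (cases a) (auto simp: supp_single)
qed (auto simp: evenw_def supp_single)

lemma ham0: "ham 0 = {[False]}"
proof (intro set_eqI iffI)
  fix v assume "v \<in> ham 0"
  then obtain a where v: "v = [a]" "even (card (supp [a]))" by (auto simp: ham_def length_Suc_conv)
  then show "v \<in> {[False]}" by (cases a) (auto simp: supp_single)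
qed (auto simp: ham_def supp_single)

lemma ham1: "ham 1 = {[False,False]}"
proof -
  have "ham 1 = {u @ vadd u v | u v. u \<in> evenw 1 \<and> v \<in> ham 0}" using ham_Suc[of 0] by simp
  also have "\<dots> = {[False] @ vadd [False] [False]}" unfolding evenw1 ham0 by auto
  also have "\<dots> = {[False,False]}" by (simp add: vadd_def)
  finally show ?thesis .
qed

lemma ham2: "ham 2 = {[False,False,False,False],[True,True,True,True]}"
proof -
  have "ham 2 = {u @ vadd u v | u v. u \<in> evenw 2 \<and> v \<in> ham 1}" using ham_Suc[of 1] by (simp add: numeral_2_eq_2)
  also have "\<dots> = {[False,False] @ vadd [False,False] [False,False], [True,True] @ vadd [True,True] [False,False]}"
    unfolding evenw2 ham1 by blast
  also have "\<dots> = {[False,False,False,False],[True,True,True,True]}" by (simp add: vadd_def)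
  finally show ?thesis .
qed

lemma RM_even: "1 \<le> m \<Longrightarrow> RM (int m - 1) m = evenw (2^m)"
proof (induction m)
  case 0 then show ?case by simp
next
  case (Suc k)
  show ?case
  proof (cases "k = 0")
    case True
    have "RM (int (Suc k) - 1) (Suc k) = {[False,False],[True,True]}"
      using True by (simp add: numeral_2_eq_2)
    then show ?thesis using True evenw2 by simp
  next
    case False
    have "RM (int (Suc k) - 1) (Suc k) = {u @ vadd u v |u v. u \<in> RM (int k) k \<and> v \<in> RM (int k - 1) k}"
      using False by simp
    also have "\<dots> = {u @ vadd u v |u v. length u = 2^k \<and> v \<in> evenw (2^k)}"
      using False Suc.IH RM_full[of k] by simp
    also have "\<dots> = evenw (2 ^ Suc k)" using evenw_double[of "2^k"] by simp
    finally show ?thesis .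
  qed
qed

lemma RM_ham: "1 \<le> m \<Longrightarrow> RM (int m - 2) m = ham m"
proof (induction m)
  case 0 then show ?case by simp
next
  case (Suc k)
  show ?case
  proof (cases "k \<le> 1")
    case True
    then consider "k = 0" | "k = 1" by linarith
    then show ?thesis
    proof cases
      case 1 then show ?thesis using ham1 by (simp add: numeral_2_eq_2)
    next
      case 2
      have "RM (int (Suc k) - 2) (Suc k) = {replicate 4 False, replicate 4 True}" using 2 by simp
      then show ?thesis using 2 ham2 by (simp add: numeral_2_eq_2 numeral_eq_Suc)
    qed
  next
    case False
    have e1: "int (Suc k) - 2 = int k - 1" by simp
    have e2: "int k - 1 - 1 = int k - 2" by simp
    have "RM (int (Suc k) - 2) (Suc k) = {u @ vadd u v |u v. u \<in> RM (int k - 1) k \<and> v \<in> RM (int k - 1 - 1) k}"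
      unfolding e1 using False by simp
    also have "\<dots> = {u @ vadd u v |u v. u \<in> evenw (2^k) \<and> v \<in> ham k}"
      unfolding e2 using False Suc.IH RM_even[of k] by simp
    also have "\<dots> = ham (Suc k)" using ham_Suc[of k] by simp
    finally show ?thesis .
  qed
qed

lemma key:
  "finite U \<Longrightarrow> U \<noteq> {} \<Longrightarrow>
   (\<forall>j<d. E j \<subseteq> U \<and> even (card (E j)) \<and> (\<forall>k<d. odd (card {i\<in>E j. bit i k}) \<longleftrightarrow> j = k))
   \<Longrightarrow> d + 1 \<le> card (U::nat set)"
proof (induction d arbitrary: U E)
  case 0
  then show ?case by (simp add: Suc_leI card_gt_0_iff)
next
  case (Suc d)
  note h = Suc.prems(3)
  have Ed: "E d \<subseteq> U" "even (card (E d))" "odd (card {i\<in>E d. bit i d})" using h by auto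
  have fEd: "finite (E d)" using Ed(1) Suc.prems(1) finite_subset by blast
  obtain x where x: "x \<in> E d" "bit x d"
  proof -
    have "{i\<in>E d. bit i d} \<noteq> {}" using Ed(3) by (metis card.empty even_zero)
    then show ?thesis using that by blast
  qed
  obtain y where y: "y \<in> E d" "y \<noteq> x"
  proof (rule ccontr)
    assume "\<not> thesis"
    then have "E d = {x}" using x that by blast
    then show False using Ed(2) by simp
  qed
  define U' where "U' = U - {x}"
  define E' where "E' = (\<lambda>j. if x \<in> E j then (E j - E d) \<union> (E d - E j) else E j)"
  have fU': "finite U'" using Suc.prems(1) by (simp add: U'_def)
  have nU': "U' \<noteq> {}" using y Ed(1) by (auto simp: U'_def)
  have "\<forall>j<d. E' j \<subseteq> U' \<and> even (card (E' j)) \<and> (\<forall>k<d. odd (card {i\<in>E' j. bit i k}) \<longleftrightarrow> j = k)"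
  proof (intro allI impI)
    fix j assume j: "j < d"
    have Ej: "E j \<subseteq> U" "even (card (E j))" "\<forall>k<d. odd (card {i\<in>E j. bit i k}) \<longleftrightarrow> j = k"
      using h j by auto
    have fEj: "finite (E j)" using Ej(1) Suc.prems(1) finite_subset by blast
    show "E' j \<subseteq> U' \<and> even (card (E' j)) \<and> (\<forall>k<d. odd (card {i\<in>E' j. bit i k}) \<longleftrightarrow> j = k)"
    proof (cases "x \<in> E j")
      case False
      then show ?thesis using Ej by (auto simp: E'_def U'_def)
    next
      case True
      have e: "E' j = (E j - E d) \<union> (E d - E j)" using True by (simp add: E'_def)
      have 1: "E' j \<subseteq> U'" using e Ej(1) Ed(1) x(1) True by (auto simp: U'_def)
      have 2: "even (card (E' j))" using e odd_symdiff[OF fEj fEd] Ej(2) Ed(2) by simp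
      have 3: "odd (card {i\<in>E' j. bit i k}) \<longleftrightarrow> j = k" if k: "k < d" for k
      proof -
        have fa: "finite {i\<in>E j. bit i k}" "finite {i\<in>E d. bit i k}" using fEj fEd by auto
        have "odd (card {i\<in>E d. bit i k}) \<longleftrightarrow> False" using h k by auto
        then show ?thesis unfolding e filt_symdiff using odd_symdiff[OF fa] Ej(3) k by simp
      qed
      show ?thesis using 1 2 3 by blast
    qed
  qed
  then have "d + 1 \<le> card U'" using Suc.IH[OF fU' nU'] by blast
  moreover have "card U = card U' + 1" using Suc.prems(1) x(1) Ed(1) unfolding U'_def
    by (metis One_nat_def Suc_pred add.commute card_Diff_singleton card_gt_0_iff empty_iff plus_1_eq_Suc subsetD)
  ultimately show ?case by simp
qed

lemma cov_rad_eq: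
  assumes up: "\<forall>V. is_mat t n V \<longrightarrow> (\<exists>c\<in>code_pow t C. dist_t V c \<le> \<rho>)"
    and low1: "is_mat t n V0" and low2: "\<forall>c\<in>code_pow t C. \<rho> \<le> dist_t V0 c"
  shows "cov_rad t n C = \<rho>"
  unfolding cov_rad_def
proof (rule Least_equality)
  show "\<forall>V. is_mat t n V \<longrightarrow> (\<exists>c\<in>code_pow t C. dist_t V c \<le> \<rho>)" by (rule up)
next
  fix y assume "\<forall>V. is_mat t n V \<longrightarrow> (\<exists>c\<in>code_pow t C. dist_t V c \<le> y)"
  then obtain c where "c \<in> code_pow t C" "dist_t V0 c \<le> y" using low1 by blast
  then show "\<rho> \<le> y" using low2 by force
qed

lemma map2_map: "map2 f xs (map g xs) = map (\<lambda>x. f x (g x)) xs"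
  by (induction xs) auto

lemma correct:
  assumes V: "is_mat t N V"
    and E: "\<forall>v\<in>set V. E v \<subseteq> {..<N} \<and> vadd v (ind N (E v)) \<in> C"
    and X: "(\<Union>v\<in>set V. E v) \<subseteq> X" "finite X" "card X \<le> \<rho>"
  shows "\<exists>c\<in>code_pow t C. dist_t V c \<le> \<rho>"
proof
  define c where "c = map (\<lambda>v. vadd v (ind N (E v))) V"
  show "c \<in> code_pow t C" using V E by (auto simp: c_def code_pow_def is_mat_def)
  have "map2 vadd V c = map (\<lambda>v. vadd v (vadd v (ind N (E v)))) V" by (simp add: c_def map2_map)
  also have "\<dots> = map (\<lambda>v. ind N (E v)) V" using V by (auto simp: vadd_vadd is_mat_def)
  finally have "dist_t V c = card (\<Union>v\<in>set V. supp (ind N (E v)))"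
    by (simp add: dist_t_def wt_t_def)
  also have "\<dots> = card (\<Union>v\<in>set V. E v)"
  proof -
    have "(\<Union>v\<in>set V. supp (ind N (E v))) = (\<Union>v\<in>set V. E v)" using E by (auto simp: supp_ind)
    then show ?thesis by simp
  qed
  also have "\<dots> \<le> card X" using X by (simp add: card_mono)
  finally show "dist_t V c \<le> \<rho>" using X by simp
qed

lemma row_sub:
  assumes "j < length V" "j < length c"
  shows "supp (vadd (V!j) (c!j)) \<subseteq> (\<Union>v\<in>set (map2 vadd V c). supp v)"
proof -
  have "vadd (V!j) (c!j) \<in> set (map2 vadd V c)"
    using assms by (metis (no_types, lifting) length_map length_zip min_less_iff_conj nth_map nth_mem nth_zip case_prod_conv)
  then show ?thesis by blast
qed

lemma union_finite: "finite (\<Union>v\<in>set W. supp v)" by (simp add: supp_finite)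

lemma fix_ham:
  assumes v: "length v = 2^m" and B: "B \<subseteq> {..<2^m}" "0 \<notin> B"
    and bits: "\<forall>k. odd (card {i\<in>B. bit i k}) \<longleftrightarrow> odd (card {i\<in>supp v. bit i k})"
  shows "vadd v (ind (2^m) (B \<union> (if odd (card B) = odd (card (supp v)) then {} else {0}))) \<in> ham m"
proof -
  define E where "E = B \<union> (if odd (card B) = odd (card (supp v)) then {} else {0})"
  have fB: "finite B" using B finite_subset by blast
  have EN: "E \<subseteq> {..<2^m}" using B by (auto simp: E_def)
  have sE: "supp (ind (2^m) E) = E" using EN by (auto simp: supp_ind)
  have l: "length v = length (ind (2^m) E)" using v by simp
  have pE: "odd (card E) \<longleftrightarrow> odd (card (supp v))" using fB B(2) by (auto simp: E_def)
  have bE: "{i\<in>E. bit i k} = {i\<in>B. bit i k}" for k by (auto simp: E_def)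
  have "even (card (supp (vadd v (ind (2^m) E))))" using odd_card_vadd[OF l] sE pE by simp
  moreover have "even (card {i\<in>supp (vadd v (ind (2^m) E)). bit i k})" for k
    using odd_cnt_vadd[OF l, of "\<lambda>i. bit i k"] sE bE bits by simp
  ultimately have "vadd v (ind (2^m) E) \<in> ham m" using v by (simp add: ham_def)
  then show ?thesis unfolding E_def .
qed

lemma cnt_high: "length v = 2^m \<Longrightarrow> m \<le> k \<Longrightarrow> {i\<in>supp v. bit i k} = {}"
proof -
  assume a: "length v = 2^m" "m \<le> k"
  have "i < 2^m" if "i \<in> supp v" for i using that supp_sub[of v] a(1) by auto
  then show ?thesis using bit_lt[OF _ a(2)] by blast
qed

lemma ismat_rep: "is_mat t n (replicate t (replicate n False))" by (simp add: is_mat_def)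

lemma R_full: "1 \<le> m \<Longrightarrow> R_t t (int m) m = 0"
  unfolding R_t_def RM_full
proof (rule cov_rad_eq[OF _ ismat_rep])
  show "\<forall>V. is_mat t (2 ^ m) V \<longrightarrow> (\<exists>c\<in>code_pow t {v. length v = 2 ^ m}. dist_t V c \<le> 0)"
  proof (intro allI impI)
    fix V assume V: "is_mat t (2 ^ m) V"
    show "\<exists>c\<in>code_pow t {v. length v = 2 ^ m}. dist_t V c \<le> 0"
      by (rule correct[OF V, of "\<lambda>_. {}" _ "{}"]) (use V in \<open>auto simp: is_mat_def\<close>)
  qed
qed simp

lemma R_even: "1 \<le> m \<Longrightarrow> 1 \<le> t \<Longrightarrow> R_t t (int m - 1) m = 1"
  unfolding R_t_def RM_even
proof -
  assume m: "1 \<le> m" and t: "1 \<le> t"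
  define N :: nat where "N = 2^m"
  have N: "0 < N" by (simp add: N_def)
  define V0 where "V0 = map (\<lambda>j. ind N (if j = 0 then {0} else {})) [0..<t]"
  have V0: "is_mat t N V0" by (auto simp: V0_def is_mat_def)
  show "cov_rad t (2 ^ m) (evenw (2 ^ m)) = 1" unfolding N_def[symmetric]
  proof (rule cov_rad_eq[OF _ V0])
    show "\<forall>V. is_mat t N V \<longrightarrow> (\<exists>c\<in>code_pow t (evenw N). dist_t V c \<le> 1)"
    proof (intro allI impI)
      fix V assume V: "is_mat t N V"
      show "\<exists>c\<in>code_pow t (evenw N). dist_t V c \<le> 1"
      proof (rule correct[OF V, of "\<lambda>v. if even (card (supp v)) then {} else {0}" _ "{0}"])
        show "\<forall>v\<in>set V. (if even (card (supp v)) then {} else {0}) \<subseteq> {..<N} \<and>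
          vadd v (ind N (if even (card (supp v)) then {} else {0})) \<in> evenw N"
        proof
          fix v assume vV: "v \<in> set V"
          have lv: "length v = N" using V vV by (auto simp: is_mat_def)
          define E where "E = (if even (card (supp v)) then {} else {0::nat})"
          have sE: "supp (ind N E) = E" using N by (auto simp: supp_ind E_def)
          have l: "length v = length (ind N E)" using lv by simp
          have "even (card (supp (vadd v (ind N E))))" using odd_card_vadd[OF l] sE by (auto simp: E_def)
          then have "vadd v (ind N E) \<in> evenw N" using lv by (simp add: evenw_def)
          then show "(if even (card (supp v)) then {} else {0}) \<subseteq> {..<N} \<and>
            vadd v (ind N (if even (card (supp v)) then {} else {0})) \<in> evenw N"
            using N by (auto simp: E_def)
        qed
      qed auto
    qed
  next
    show "\<forall>c\<in>code_pow t (evenw N). 1 \<le> dist_t V0 c"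
    proof
      fix c assume c: "c \<in> code_pow t (evenw N)"
      have lc: "length c = t" using c by (simp add: code_pow_def)
      have "0 < length c" using lc t by simp
      then have "c ! 0 \<in> set c" by (rule nth_mem)
      then have c0: "c ! 0 \<in> evenw N" using c by (auto simp: code_pow_def)
      have V00: "V0 ! 0 = ind N {0}" using t by (simp add: V0_def)
      have s0: "supp (ind N {0}) = {0}" using N by (auto simp: supp_ind)
      have l: "length (ind N {0}) = length (c ! 0)" using c0 by (simp add: evenw_def)
      have "odd (card (supp (vadd (V0!0) (c!0))))" using odd_card_vadd[OF l] s0 c0 V00 by (simp add: evenw_def)
      then have ne: "supp (vadd (V0!0) (c!0)) \<noteq> {}" by auto
      have "supp (vadd (V0!0) (c!0)) \<subseteq> (\<Union>v\<in>set (map2 vadd V0 c). supp v)"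
        by (rule row_sub) (use t lc V0 in \<open>auto simp: is_mat_def\<close>)
      then have "(\<Union>v\<in>set (map2 vadd V0 c). supp v) \<noteq> {}" using ne by blast
      moreover have "finite (\<Union>v\<in>set (map2 vadd V0 c). supp v)" by (rule union_finite)
      ultimately have "0 < card (\<Union>v\<in>set (map2 vadd V0 c). supp v)" by (simp only: card_gt_0_iff) simp
      then show "1 \<le> dist_t V0 c" unfolding dist_t_def wt_t_def by linarith
    qed
  qed
qed

lemma up_small:
  assumes V: "is_mat t (2^m) V"
  shows "\<exists>c\<in>code_pow t (ham m). dist_t V c \<le> t + 1"
proof -
  define s where "s = (\<lambda>v. SOME s::nat. s < 2^m \<and> (\<forall>k. bit s k \<longleftrightarrow> k < m \<and> odd (card {i\<in>supp v. bit i k})))"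
  have s: "s v < 2^m \<and> (\<forall>k. bit (s v) k \<longleftrightarrow> k < m \<and> odd (card {i\<in>supp v. bit i k}))" for v
    unfolding s_def by (rule someI_ex) (rule exists_num)
  define B where "B = (\<lambda>v. {s v} - {0})"
  define E where "E = (\<lambda>v. B v \<union> (if odd (card (B v)) = odd (card (supp v)) then {} else {0}))"
  show ?thesis
  proof (rule correct[OF V, of E _ "insert 0 (s ` set V)"])
    show "\<forall>v\<in>set V. E v \<subseteq> {..<2^m} \<and> vadd v (ind (2^m) (E v)) \<in> ham m"
    proof
      fix v assume vV: "v \<in> set V"
      have lv: "length v = 2^m" using V vV by (auto simp: is_mat_def)
      have B1: "B v \<subseteq> {..<2^m}" "0 \<notin> B v" using s[of v] by (auto simp: B_def)
      have B2: "\<forall>k. odd (card {i\<in>B v. bit i k}) \<longleftrightarrow> odd (card {i\<in>supp v. bit i k})"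
      proof
        fix k
        have e: "{i\<in>B v. bit i k} = (if bit (s v) k then {s v} else {})"
        proof -
          have z: "\<not> bit (0::nat) k" by simp
          have "bit (s v) k \<Longrightarrow> s v \<noteq> 0" using z by metis
          then show ?thesis by (auto simp: B_def)
        qed
        show "odd (card {i\<in>B v. bit i k}) \<longleftrightarrow> odd (card {i\<in>supp v. bit i k})"
        proof (cases "k < m")
          case True then show ?thesis using e s[of v] by simp
        next
          case False
          then have "m \<le> k" by simp
          then show ?thesis using s[of v] by (simp add: e cnt_high[OF lv])
        qed
      qed
      have "E v \<subseteq> {..<2^m}" using B1 by (auto simp: E_def)
      then show "E v \<subseteq> {..<2^m} \<and> vadd v (ind (2^m) (E v)) \<in> ham m"
        using fix_ham[OF lv B1 B2] by (simp add: E_def)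
    qed
  next
    show "(\<Union>v\<in>set V. E v) \<subseteq> insert 0 (s ` set V)" by (auto simp: E_def B_def split: if_splits)
  next
    have "card (insert 0 (s ` set V)) \<le> card (s ` set V) + 1" by (simp add: card_insert_le_m1)
    also have "\<dots> \<le> card (set V) + 1" by (simp add: card_image_le)
    also have "\<dots> \<le> t + 1" using V card_length[of V] by (simp add: is_mat_def)
    finally show "card (insert 0 (s ` set V)) \<le> t + 1" .
  qed simp
qed

lemma up_large:
  assumes V: "is_mat t (2^m) V"
  shows "\<exists>c\<in>code_pow t (ham m). dist_t V c \<le> m + 1"
proof -
  define B where "B = (\<lambda>v. (\<lambda>k. (2::nat)^k) ` {k. k < m \<and> odd (card {i\<in>supp v. bit i k})})"
  define E where "E = (\<lambda>v. B v \<union> (if odd (card (B v)) = odd (card (supp v)) then {} else {0}))"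
  show ?thesis
  proof (rule correct[OF V, of E _ "insert 0 ((\<lambda>k. (2::nat)^k) ` {..<m})"])
    show "\<forall>v\<in>set V. E v \<subseteq> {..<2^m} \<and> vadd v (ind (2^m) (E v)) \<in> ham m"
    proof
      fix v assume vV: "v \<in> set V"
      have lv: "length v = 2^m" using V vV by (auto simp: is_mat_def)
      have B1: "B v \<subseteq> {..<2^m}" "0 \<notin> B v" by (auto simp: B_def)
      have B2: "\<forall>k. odd (card {i\<in>B v. bit i k}) \<longleftrightarrow> odd (card {i\<in>supp v. bit i k})"
      proof
        fix k
        have e: "{i\<in>B v. bit i k} = (if k < m \<and> odd (card {i\<in>supp v. bit i k}) then {2^k} else {})"
          by (auto simp: B_def bit_exp_iff)
        show "odd (card {i\<in>B v. bit i k}) \<longleftrightarrow> odd (card {i\<in>supp v. bit i k})"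
        proof (cases "k < m")
          case True then show ?thesis using e by simp
        next
          case False
          then have "m \<le> k" by simp
          then show ?thesis by (simp add: e cnt_high[OF lv])
        qed
      qed
      have "E v \<subseteq> {..<2^m}" using B1 by (auto simp: E_def)
      then show "E v \<subseteq> {..<2^m} \<and> vadd v (ind (2^m) (E v)) \<in> ham m"
        using fix_ham[OF lv B1 B2] by (simp add: E_def)
    qed
  next
    show "(\<Union>v\<in>set V. E v) \<subseteq> insert 0 ((\<lambda>k. (2::nat)^k) ` {..<m})" by (auto simp: E_def B_def split: if_splits)
  next
    have "card (insert 0 ((\<lambda>k. (2::nat)^k) ` {..<m})) \<le> card ((\<lambda>k. (2::nat)^k) ` {..<m}) + 1"
      by (simp add: card_insert_le_m1)
    also have "\<dots> \<le> m + 1" using card_image_le[of "{..<m}" "\<lambda>k. (2::nat)^k"] by simp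
    finally show "card (insert 0 ((\<lambda>k. (2::nat)^k) ` {..<m})) \<le> m + 1" .
  qed simp
qed

lemma low_ham:
  assumes m: "1 \<le> m" and t: "1 \<le> t"
  defines "d \<equiv> min t m"
  defines "V0 \<equiv> map (\<lambda>j. ind (2^m) (if j < d then {0, 2^j} else {})) [0..<t]"
  shows "is_mat t (2^m) V0" and "\<forall>c\<in>code_pow t (ham m). d + 1 \<le> dist_t V0 c"
proof -
  show "is_mat t (2^m) V0" by (auto simp: V0_def is_mat_def)
next
  show "\<forall>c\<in>code_pow t (ham m). d + 1 \<le> dist_t V0 c"
  proof
    fix c assume c: "c \<in> code_pow t (ham m)"
    have lc: "length c = t" using c by (simp add: code_pow_def)
    define U where "U = (\<Union>v\<in>set (map2 vadd V0 c). supp v)"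
    define E where "E = (\<lambda>j. supp (vadd (V0!j) (c!j)))"
    have fU: "finite U" unfolding U_def by (rule union_finite)
    have Ej: "E j \<subseteq> U \<and> even (card (E j)) \<and> (\<forall>k<d. odd (card {i\<in>E j. bit i k}) \<longleftrightarrow> j = k)"
      if j: "j < d" for j
    proof -
      have jt: "j < t" "j < m" using j by (auto simp: d_def)
      have V0j: "V0 ! j = ind (2^m) {0, 2^j}" using jt j by (simp add: V0_def)
      have "(2::nat)^j < 2^m" using jt by simp
      then have s0: "supp (V0 ! j) = {0, 2^j}" unfolding V0j by (auto simp: supp_ind)
      have "c ! j \<in> set c" using jt lc by simp
      then have cj: "c ! j \<in> ham m" using c by (auto simp: code_pow_def)
      have l: "length (V0 ! j) = length (c ! j)" using cj V0j by (simp add: ham_def)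
      have 1: "E j \<subseteq> U" unfolding E_def U_def
        by (rule row_sub) (use jt lc in \<open>auto simp: V0_def\<close>)
      have "card {0::nat, 2^j} = 2" by simp
      then have 2: "even (card (E j))" unfolding E_def using odd_card_vadd[OF l] s0 cj by (simp add: ham_def)
      have 3: "odd (card {i\<in>E j. bit i k}) \<longleftrightarrow> j = k" for k
      proof -
        have z: "\<not> bit (0::nat) k" by simp
        have e0: "{i\<in>{0::nat, 2^j}. bit i k} = {i\<in>{2^j}. bit i k}" using z by blast
        have "{i\<in>{2^j}. bit i k} = (if j = k then {2^j::nat} else {})" by (auto simp: bit_exp_iff)
        then have e: "{i\<in>{0::nat, 2^j}. bit i k} = (if j = k then {2^j} else {})" using e0 by simp
        have "even (card {i\<in>supp (c!j). bit i k})" using cj by (simp add: ham_def)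
        then show ?thesis unfolding E_def using odd_cnt_vadd[OF l, of "\<lambda>i. bit i k"] s0 e by simp
      qed
      show ?thesis using 1 2 3 by blast
    qed
    have d0: "0 < d" using m t by (simp add: d_def)
    have "odd (card {i\<in>E 0. bit i 0})" using Ej[OF d0] d0 by blast
    then have "E 0 \<noteq> {}" by auto
    then have "U \<noteq> {}" using Ej[OF d0] by blast
    then have "d + 1 \<le> card U" using key[OF fU] Ej by blast
    then show "d + 1 \<le> dist_t V0 c" by (simp add: U_def dist_t_def wt_t_def)
  qed
qed

lemma R_ham: "1 \<le> m \<Longrightarrow> 1 \<le> t \<Longrightarrow> R_t t (int m - 2) m = min t m + 1"
  unfolding R_t_def RM_ham
proof -
  assume m: "1 \<le> m" and t: "1 \<le> t"
  show "cov_rad t (2 ^ m) (ham m) = min t m + 1"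
  proof (rule cov_rad_eq[OF _ low_ham(1)[OF m t] low_ham(2)[OF m t]])
    show "\<forall>V. is_mat t (2 ^ m) V \<longrightarrow> (\<exists>c\<in>code_pow t (ham m). dist_t V c \<le> min t m + 1)"
    proof (intro allI impI)
      fix V assume V: "is_mat t (2 ^ m) V"
      show "\<exists>c\<in>code_pow t (ham m). dist_t V c \<le> min t m + 1"
      proof (cases "t \<le> m")
        case True then show ?thesis using up_small[OF V] by simp
      next
        case False then show ?thesis using up_large[OF V] by simp
      qed
    qed
  qed
qed

theorem proposition13:
  fixes m t :: nat
  assumes "1 \<le> m" and "1 \<le> t"
  shows "R_t t (int m) m = 0 \<and> R_t t (int m - 1) m = 1 \<and> R_t t (int m - 2) m = min t m + 1"
  using R_full[OF assms(1)] R_even[OF assms] R_ham[OF assms] by simp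

end
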